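(* Let $s\in\mathbb{N}$ and let $X\subseteq\mathbb{C}(\mathbb{Z})$ be the space of sequences $x_t=q(t)$, $q$ a complex polynomial of degree at most $s-1$. For each $m\in\mathbb{N}$ let $\phi^{*,m}_+\in\mathbb{C}^+_m(\mathbb{Z})$ be a reproducing filter for $X$ of minimal $\ell_2$-norm among all reproducing filters for $X$ in $\mathbb{C}^+_m(\mathbb{Z})$. Then $$\lim_{m\to\infty}m\|\phi^{*,m}_+\|_2^2=s^2.$$
   Context: $\mathbb{C}(\mathbb{Z})$: two-sided complex sequences; $\mathbb{C}^+_m(\mathbb{Z})$: sequences with $x_t=0$ for $t\notin\{0,\dots,m\}$. Convolution $(u*v)_t=\sum_\tau u_\tau v_{t-\tau}$; $\phi$ is reproducing for $X$ if $\phi*x=x$ for all $x\in X$. $\|\cdot\|_2$ is the $\ell_2$-norm. *)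

theory Defs
  imports "HOL-Analysis.Analysis" "HOL-Computational_Algebra.Polynomial"
begin

definition conv :: "(int \<Rightarrow> complex) \<Rightarrow> (int \<Rightarrow> complex) \<Rightarrow> int \<Rightarrow> complex" where
  "conv u v t = (\<Sum>\<^sub>\<infinity>\<tau>\<in>UNIV. u \<tau> * v (t - \<tau>))"

definition reproducing :: "(int \<Rightarrow> complex) \<Rightarrow> (int \<Rightarrow> complex) set \<Rightarrow> bool" where
  "reproducing \<phi> X \<longleftrightarrow> (\<forall>x\<in>X. conv \<phi> x = x)"

definition Cplus :: "nat \<Rightarrow> (int \<Rightarrow> complex) set" where
  "Cplus m = {x. \<forall>t. (t < 0 \<or> t > int m) \<longrightarrow> x t = 0}"

definition l2norm :: "(int \<Rightarrow> complex) \<Rightarrow> real" where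
  "l2norm x = sqrt (\<Sum>\<^sub>\<infinity>t\<in>UNIV. (cmod (x t))\<^sup>2)"

text \<open>Sequences given by a complex polynomial of degree at most s-1
  (for s = 0 only the zero polynomial).\<close>
definition polyseq :: "nat \<Rightarrow> (int \<Rightarrow> complex) set" where
  "polyseq s = {x. \<exists>q :: complex poly. (q = 0 \<or> degree q < s) \<and> (\<forall>t. x t = poly q (of_int t))}"

end

theory Submission
  imports Defs "Jordan_Normal_Form.Determinant"
begin

lemma lagrange_interp:
  fixes p :: "real poly" and a :: "nat \<Rightarrow> real"
  assumes inj: "inj_on a {..<n}" and deg: "degree p < n"
  shows "poly p x = (\<Sum>j<n. poly p (a j) * (\<Prod>l\<in>{..<n}-{j}. (x - a l) / (a j - a l)))"
proof -
  define q where "q = (\<Sum>j<n. Polynomial.smult (poly p (a j)) (\<Prod>l\<in>{..<n}-{j}. Polynomial.smult (1/(a j - a l)) [:- a l, 1:]))"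
  have pq: "poly q y = (\<Sum>j<n. poly p (a j) * (\<Prod>l\<in>{..<n}-{j}. (y - a l) / (a j - a l)))" for y
    unfolding q_def poly_sum poly_smult poly_prod
    by (intro sum.cong refl arg_cong2[where f="(*)"] prod.cong) (auto simp: field_simps)
  have dq: "degree q \<le> n - 1"
    unfolding q_def
  proof (intro degree_sum_le)
    fix j assume j: "j \<in> {..<n}"
    have "degree (\<Prod>l\<in>{..<n}-{j}. Polynomial.smult (1/(a j - a l)) [:- a l, 1:]) \<le> (\<Sum>l\<in>{..<n}-{j}. 1)"
      by (rule order.trans[OF degree_prod_sum_le], simp, rule sum_mono, simp only: o_def, rule order.trans[OF degree_smult_le], simp)
    also have "\<dots> = n - 1" using j by simp
    finally show "degree (Polynomial.smult (poly p (a j)) (\<Prod>l\<in>{..<n}-{j}. Polynomial.smult (1/(a j - a l)) [:- a l, 1:])) \<le> n - 1"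
      by (rule order.trans[OF degree_smult_le])
  qed simp
  have eq: "poly p z = poly q z" if "z \<in> a ` {..<n}" for z
  proof -
    from that obtain k where k: "k < n" "z = a k" by auto
    have "poly q z = (\<Sum>j<n. poly p (a j) * (\<Prod>l\<in>{..<n}-{j}. (a k - a l) / (a j - a l)))"
      using pq k by simp
    also have "\<dots> = (\<Sum>j\<in>{k}. poly p (a j) * (\<Prod>l\<in>{..<n}-{j}. (a k - a l) / (a j - a l)))"
    proof (intro sum.mono_neutral_right)
      show "\<forall>i\<in>{..<n} - {k}. poly p (a i) * (\<Prod>l\<in>{..<n} - {i}. (a k - a l) / (a i - a l)) = 0"
      proof
        fix i assume i: "i \<in> {..<n} - {k}"
        have "(\<Prod>l\<in>{..<n} - {i}. (a k - a l) / (a i - a l)) = 0"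
          using i k by (intro prod_zero) auto
        thus "poly p (a i) * (\<Prod>l\<in>{..<n} - {i}. (a k - a l) / (a i - a l)) = 0" by simp
      qed
    qed (use k in auto)
    also have "\<dots> = poly p (a k)"
    proof -
      have "(\<Prod>l\<in>{..<n}-{k}. (a k - a l) / (a k - a l)) = 1"
        using inj k by (intro prod.neutral) (auto simp: inj_on_def)
      thus ?thesis by simp
    qed
    finally show ?thesis using k by simp
  qed
  have card: "card (a ` {..<n}) = n" using inj by (simp add: card_image)
  have "p = q"
    by (rule poly_eqI_degree[OF eq]) (use deg dq card in auto)
  hence "poly p x = poly q x" by simp
  also have "\<dots> = (\<Sum>j<n. poly p (a j) * (\<Prod>l\<in>{..<n}-{j}. (x - a l) / (a j - a l)))" by (rule pq)
  finally show ?thesis .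
qed

lemma lagrange_exists:
  fixes a :: "nat \<Rightarrow> real" and v :: "nat \<Rightarrow> real"
  assumes inj: "inj_on a {..<n}" and n: "n > 0"
  shows "\<exists>q. degree q < n \<and> (\<forall>k<n. poly q (a k) = v k) \<and>
     (\<forall>y. poly q y = (\<Sum>j<n. v j * (\<Prod>l\<in>{..<n}-{j}. (y - a l) / (a j - a l))))"
proof -
  define q where "q = (\<Sum>j<n. Polynomial.smult (v j) (\<Prod>l\<in>{..<n}-{j}. Polynomial.smult (1/(a j - a l)) [:- a l, 1:]))"
  have pq: "poly q y = (\<Sum>j<n. v j * (\<Prod>l\<in>{..<n}-{j}. (y - a l) / (a j - a l)))" for y
    unfolding q_def poly_sum poly_smult poly_prod
    by (intro sum.cong refl arg_cong2[where f="(*)"] prod.cong) (auto simp: field_simps)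
  have dq: "degree q \<le> n - 1"
    unfolding q_def
  proof (intro degree_sum_le)
    fix j assume j: "j \<in> {..<n}"
    have "degree (\<Prod>l\<in>{..<n}-{j}. Polynomial.smult (1/(a j - a l)) [:- a l, 1:]) \<le> (\<Sum>l\<in>{..<n}-{j}. 1)"
      by (rule order.trans[OF degree_prod_sum_le], simp, rule sum_mono, simp only: o_def, rule order.trans[OF degree_smult_le], simp)
    also have "\<dots> = n - 1" using j by simp
    finally show "degree (Polynomial.smult (v j) (\<Prod>l\<in>{..<n}-{j}. Polynomial.smult (1/(a j - a l)) [:- a l, 1:])) \<le> n - 1"
      by (rule order.trans[OF degree_smult_le])
  qed simp
  have eq: "poly q (a k) = v k" if k: "k < n" for k
  proof -
    have "poly q (a k) = (\<Sum>j<n. v j * (\<Prod>l\<in>{..<n}-{j}. (a k - a l) / (a j - a l)))"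
      using pq k by simp
    also have "\<dots> = (\<Sum>j\<in>{k}. v j * (\<Prod>l\<in>{..<n}-{j}. (a k - a l) / (a j - a l)))"
    proof (intro sum.mono_neutral_right)
      show "\<forall>i\<in>{..<n} - {k}. v i * (\<Prod>l\<in>{..<n} - {i}. (a k - a l) / (a i - a l)) = 0"
      proof
        fix i assume i: "i \<in> {..<n} - {k}"
        have "(\<Prod>l\<in>{..<n} - {i}. (a k - a l) / (a i - a l)) = 0"
          using i k by (intro prod_zero) auto
        thus "v i * (\<Prod>l\<in>{..<n} - {i}. (a k - a l) / (a i - a l)) = 0" by simp
      qed
    qed (use k in auto)
    also have "\<dots> = v k"
    proof -
      have "(\<Prod>l\<in>{..<n}-{k}. (a k - a l) / (a k - a l)) = 1"
        using inj k by (intro prod.neutral) (auto simp: inj_on_def)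
      thus ?thesis by simp
    qed
    finally show ?thesis .
  qed
  show ?thesis
    by (rule exI[of _ q]) (use dq n eq pq in auto)
qed

lemma prod_minus0_real: "n > 0 \<Longrightarrow> (\<Prod>l\<in>{..<n}-{0}. real l) = fact (n - 1)"
proof (induction n)
  case 0 then show ?case by simp
next
  case (Suc n)
  show ?case
  proof (cases "n = 0")
    case True then show ?thesis by simp
  next
    case False
    have e: "{..<Suc n}-{0} = insert n ({..<n}-{0})" using False by auto
    have "(\<Prod>l\<in>{..<Suc n}-{0}. real l) = real n * fact (n - 1)"
      unfolding e using Suc False by (subst prod.insert) auto
    also have "\<dots> = fact n" using False by (metis Suc_pred' fact_Suc not_gr0 of_nat_fact) 
    finally show ?thesis by simp
  qed
qed

lemma prod_plus1_real: "(\<Prod>l<n. real l + 1) = fact n"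
  by (induction n) (auto simp: algebra_simps)

lemma prod_plus1_minus0_real: "(\<Prod>l\<in>{..<n}-{0}. real l + 1) = fact n"
proof (cases "n = 0")
  case True then show ?thesis by simp
next
  case False
  have "(\<Prod>l<n. real l + 1) = (real 0 + 1) * (\<Prod>l\<in>{..<n}-{0}. real l + 1)"
    using False by (subst prod.remove[of _ 0]) auto
  then show ?thesis using prod_plus1_real[of n] by simp
qed

definition Dn :: "nat \<Rightarrow> real \<Rightarrow> real" where
  "Dn n y = (\<Prod>l<n. y + real l + 1)"

lemma hilbert_core:
  fixes F :: "real poly" and b :: "nat \<Rightarrow> real"
  assumes n: "n > 0" and Fdeg: "degree F < n"
    and Fval: "\<And>i. i < n \<Longrightarrow> poly F (real i) = b i * Dn n (real i)"
  shows "\<forall>i<n. (\<Sum>j<n. (poly F (-(real j + 1)) / (\<Prod>l\<in>{..<n}-{j}. (real l - real j))) / real (i+j+1)) = b i"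
proof (intro allI impI)
  fix i assume i: "i < n"
  define a where "a = (\<lambda>l::nat. -(real l + 1))"
  have inj: "inj_on a {..<n}" by (auto simp: inj_on_def a_def)
  have Dpos: "Dn n (real i) > 0" unfolding Dn_def by (intro prod_pos) auto
  have "poly F (real i) = (\<Sum>j<n. poly F (a j) * (\<Prod>l\<in>{..<n}-{j}. (real i - a l) / (a j - a l)))"
    by (rule lagrange_interp[OF inj Fdeg])
  also have "\<dots> = (\<Sum>j<n. (poly F (-(real j + 1)) / (\<Prod>l\<in>{..<n}-{j}. (real l - real j))) * (Dn n (real i) / real (i+j+1)))"
  proof (intro sum.cong refl)
    fix j assume j: "j \<in> {..<n}"
    have "(\<Prod>l\<in>{..<n}-{j}. (real i - a l) / (a j - a l)) = (\<Prod>l\<in>{..<n}-{j}. (real i + real l + 1)) / (\<Prod>l\<in>{..<n}-{j}. (real l - real j))"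
      unfolding prod_dividef[symmetric] by (intro prod.cong refl) (auto simp: a_def algebra_simps)
    also have "(\<Prod>l\<in>{..<n}-{j}. (real i + real l + 1)) = Dn n (real i) / real (i+j+1)"
    proof -
      have "Dn n (real i) = (real i + real j + 1) * (\<Prod>l\<in>{..<n}-{j}. (real i + real l + 1))"
        unfolding Dn_def using j by (subst prod.remove[of _ j]) auto
      thus ?thesis by (simp add: field_simps)
    qed
    finally show "poly F (a j) * (\<Prod>l\<in>{..<n}-{j}. (real i - a l) / (a j - a l)) =
        (poly F (-(real j + 1)) / (\<Prod>l\<in>{..<n}-{j}. (real l - real j))) * (Dn n (real i) / real (i+j+1))"
      by (simp add: a_def)
  qed
  also have "\<dots> = Dn n (real i) * (\<Sum>j<n. (poly F (-(real j + 1)) / (\<Prod>l\<in>{..<n}-{j}. (real l - real j))) / real (i+j+1))"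
    by (simp add: sum_distrib_left field_simps)
  finally show "(\<Sum>j<n. (poly F (-(real j + 1)) / (\<Prod>l\<in>{..<n}-{j}. (real l - real j))) / real (i+j+1)) = b i"
    using Fval[OF i] Dpos by simp
qed

lemma hilbert_solve:
  assumes n: "n > 0"
  shows "\<exists>c. \<forall>i<n. (\<Sum>j<n. c j / real (i+j+1)) = b i"
proof -
  obtain F where F: "degree F < n" "\<forall>k<n. poly F (real k) = b k * Dn n (real k)"
    using lagrange_exists[of real n "\<lambda>k. b k * Dn n (real k)"] n by (auto simp: inj_on_def)
  define c where "c = (\<lambda>j. poly F (-(real j + 1)) / (\<Prod>l\<in>{..<n}-{j}. (real l - real j)))"
  have Fv: "\<And>i. i < n \<Longrightarrow> poly F (real i) = b i * Dn n (real i)" using F(2) by blast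
  have "\<forall>i<n. (\<Sum>j<n. c j / real (i+j+1)) = b i"
    unfolding c_def by (rule hilbert_core[OF n F(1) Fv])
  then show ?thesis by blast
qed

lemma hilbert_e0:
  assumes n: "n > 0"
  shows "\<exists>c. (\<forall>i<n. (\<Sum>j<n. c j / real (i+j+1)) = (if i = 0 then 1 else 0)) \<and> c 0 = (real n)^2"
proof -
  define v where "v = (\<lambda>k::nat. if k = 0 then Dn n 0 else 0)"
  obtain F where F: "degree F < n" "\<forall>k<n. poly F (real k) = v k"
     "\<forall>y. poly F y = (\<Sum>j<n. v j * (\<Prod>l\<in>{..<n}-{j}. (y - real l) / (real j - real l)))"
    using lagrange_exists[of real n v] n by (auto simp: inj_on_def)
  have Fval: "poly F (real k) = (if k = 0 then 1 else 0) * Dn n (real k)" if "k < n" for k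
    using F(2) that by (simp add: v_def)
  have "poly F (-1) = (\<Sum>j<n. v j * (\<Prod>l\<in>{..<n}-{j}. (-1 - real l) / (real j - real l)))"
    using F(3) by simp
  also have "\<dots> = (\<Sum>j\<in>{0}. v j * (\<Prod>l\<in>{..<n}-{j}. (-1 - real l) / (real j - real l)))"
    by (rule sum.mono_neutral_right) (use n in \<open>auto simp: v_def\<close>)
  also have "\<dots> = Dn n 0 * (\<Prod>l\<in>{..<n}-{0}. (real l + 1) / real l)"
    by (simp add: v_def, intro disjI2 prod.cong refl) (auto simp: field_simps)
  also have "\<dots> = fact n * (fact n / fact (n - 1))"
    unfolding prod_dividef prod_plus1_minus0_real prod_minus0_real[OF n]
    by (simp add: Dn_def prod_plus1_real)
  finally have Fm1: "poly F (-1) = fact n * (fact n / fact (n - 1))" .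
  have fn: "fact n = real n * fact (n - 1)" using n by (metis fact_reduce of_nat_fact)
  have c0: "poly F (-(real 0 + 1)) / (\<Prod>l\<in>{..<n}-{0}. (real l - real 0)) = (real n)^2"
    using Fm1 prod_minus0_real[OF n] fn by (simp add: power2_eq_square)
  define c where "c = (\<lambda>j. poly F (-(real j + 1)) / (\<Prod>l\<in>{..<n}-{j}. (real l - real j)))"
  have "\<forall>i<n. (\<Sum>j<n. c j / real (i+j+1)) = (if i = 0 then 1 else 0)"
    using hilbert_core[OF n F(1) Fval] unfolding c_def .
  moreover have "c 0 = (real n)^2" using c0 unfolding c_def .
  ultimately show ?thesis by (intro exI[of _ c] conjI)
qed

lemma pow_step_bounds:
  fixes x :: real assumes x: "x \<ge> 0"
  shows "real (Suc k) * x^k \<le> (x+1)^Suc k - x^Suc k"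
    and "(x+1)^Suc k - x^Suc k \<le> real (Suc k) * (x+1)^k"
proof -
  have eq: "(x+1)^Suc k - x^Suc k = (\<Sum>i<Suc k. x^(Suc k - Suc i) * (x+1)^i)"
    using power_diff_sumr2[of "x+1" "Suc k" x] by simp
  have lo: "x^k \<le> x^(Suc k - Suc i) * (x+1)^i" if "i < Suc k" for i
  proof -
    have "x^k = x^(k - i) * x^i" using that by (subst power_add[symmetric]) simp
    also have "\<dots> \<le> x^(k-i) * (x+1)^i" by (rule mult_left_mono[OF power_mono]) (use x in auto)
    finally show ?thesis using that by (simp add: Suc_diff_Suc)
  qed
  have hi: "x^(Suc k - Suc i) * (x+1)^i \<le> (x+1)^k" if "i < Suc k" for i
  proof -
    have "x^(k-i) * (x+1)^i \<le> (x+1)^(k-i) * (x+1)^i" by (rule mult_right_mono[OF power_mono]) (use x in auto)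
    also have "\<dots> = (x+1)^k" using that by (subst power_add[symmetric]) simp
    finally show ?thesis by simp
  qed
  have s1: "(\<Sum>i<Suc k. x^k) \<le> (\<Sum>i<Suc k. x^(Suc k - Suc i) * (x+1)^i)"
    by (rule sum_mono) (rule lo, simp)
  have s2: "(\<Sum>i<Suc k. x^(Suc k - Suc i) * (x+1)^i) \<le> (\<Sum>i<Suc k. (x+1)^k)"
    by (rule sum_mono) (rule hi, simp)
  show "real (Suc k) * x^k \<le> (x+1)^Suc k - x^Suc k"
    unfolding eq using s1 by simp
  show "(x+1)^Suc k - x^Suc k \<le> real (Suc k) * (x+1)^k"
    unfolding eq using s2 by simp
qed

lemma powsum_lower: "real m ^ Suc k \<le> real (Suc k) * (\<Sum>t\<le>m. real t ^ k)"
proof (induction m)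
  case 0 then show ?case by simp
next
  case (Suc m)
  have h: "(real m + 1)^Suc k - real m^Suc k \<le> real (Suc k) * (real m + 1)^k"
    by (rule pow_step_bounds(2)) simp
  have e: "real (Suc m) = real m + 1" by simp
  have "real (Suc m) ^ Suc k \<le> real m ^ Suc k + real (Suc k) * real (Suc m) ^ k"
    unfolding e using h by linarith
  also have "\<dots> \<le> real (Suc k) * (\<Sum>t\<le>m. real t ^ k) + real (Suc k) * real (Suc m) ^ k"
    using Suc by simp
  finally show ?case by (simp add: distrib_left)
qed

lemma powsum_upper: "real (Suc k) * (\<Sum>t\<le>m. real t ^ k) \<le> real (Suc m) ^ Suc k"
proof (induction m)
  case 0 then show ?case by (cases k) auto
next
  case (Suc m)
  have "real (Suc k) * real (Suc m) ^ k \<le> real (Suc (Suc m)) ^ Suc k - real (Suc m) ^ Suc k"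
  proof -
    have h: "real (Suc k) * real (Suc m)^k \<le> (real (Suc m) + 1)^Suc k - real (Suc m)^Suc k"
      by (rule pow_step_bounds(1)) simp
    have e: "real (Suc (Suc m)) = real (Suc m) + 1" by simp
    show ?thesis unfolding e using h by linarith
  qed
  with Suc show ?case by (simp add: distrib_left)
qed

definition Rs :: "nat \<Rightarrow> nat \<Rightarrow> real" where
  "Rs m k = (1 / real m) * (\<Sum>t\<le>m. (real t / real m) ^ k)"

lemma Rs_alt: "m > 0 \<Longrightarrow> Rs m k = (\<Sum>t\<le>m. real t ^ k) / real m ^ Suc k"
  unfolding Rs_def by (simp add: power_divide sum_divide_distrib[symmetric] field_simps)

lemma Rs_limit: "(\<lambda>m. Rs m k) \<longlonglongrightarrow> 1 / real (Suc k)"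
proof (rule tendsto_sandwich[of "\<lambda>_. 1 / real (Suc k)" _ _ "\<lambda>m. (1 + 1 / real m) ^ Suc k / real (Suc k)"])
  show "\<forall>\<^sub>F m in sequentially. 1 / real (Suc k) \<le> Rs m k"
  proof (rule eventually_sequentiallyI[of 1])
    fix m :: nat assume m: "m \<ge> 1"
    have "real m ^ Suc k / real (Suc k) \<le> (\<Sum>t\<le>m. real t ^ k)"
      using powsum_lower[of m k] by (subst pos_divide_le_eq) (auto simp: mult.commute)
    hence "real m ^ Suc k / real (Suc k) / real m ^ Suc k \<le> (\<Sum>t\<le>m. real t ^ k) / real m ^ Suc k"
      using m by (intro divide_right_mono) auto
    moreover have "real m ^ Suc k / real (Suc k) / real m ^ Suc k = 1 / real (Suc k)"
      using m by simp
    moreover have "Rs m k = (\<Sum>t\<le>m. real t ^ k) / real m ^ Suc k"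
      using m by (intro Rs_alt) simp
    ultimately show "1 / real (Suc k) \<le> Rs m k" by simp
  qed
  show "\<forall>\<^sub>F m in sequentially. Rs m k \<le> (1 + 1 / real m) ^ Suc k / real (Suc k)"
  proof (rule eventually_sequentiallyI[of 1])
    fix m :: nat assume m: "m \<ge> 1"
    have "(\<Sum>t\<le>m. real t ^ k) \<le> real (Suc m) ^ Suc k / real (Suc k)"
      using powsum_upper[of k m] by (subst pos_le_divide_eq) (auto simp: mult.commute)
    hence A0: "(\<Sum>t\<le>m. real t ^ k) / real m ^ Suc k \<le> real (Suc m) ^ Suc k / real (Suc k) / real m ^ Suc k"
      using m by (intro divide_right_mono) auto
    have R: "Rs m k = (\<Sum>t\<le>m. real t ^ k) / real m ^ Suc k"
      using m by (intro Rs_alt) simp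
    have A: "Rs m k \<le> real (Suc m) ^ Suc k / real (Suc k) / real m ^ Suc k"
      using A0 unfolding R .
    have B: "real (Suc m) ^ Suc k / real (Suc k) / real m ^ Suc k = (real (Suc m) / real m) ^ Suc k / real (Suc k)"
      by (simp only: power_divide divide_divide_eq_left mult.commute)
    have C: "real (Suc m) / real m = 1 + 1 / real m"
      using m by (simp add: field_simps)
    show "Rs m k \<le> (1 + 1 / real m) ^ Suc k / real (Suc k)"
      using A unfolding B C .
  qed
  have "(\<lambda>m. (1 + 1 / real m) ^ Suc k / real (Suc k)) \<longlonglongrightarrow> (1 + 0) ^ Suc k / real (Suc k)"
    by (intro tendsto_intros lim_inverse_n') auto
  thus "(\<lambda>m. (1 + 1 / real m) ^ Suc k / real (Suc k)) \<longlonglongrightarrow> 1 / real (Suc k)" by simp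
qed simp

lemma det_mat_tendsto:
  fixes f :: "nat \<Rightarrow> nat \<times> nat \<Rightarrow> real"
  assumes "\<And>i j. i < n \<Longrightarrow> j < n \<Longrightarrow> (\<lambda>m. f m (i,j)) \<longlonglongrightarrow> g (i,j)"
  shows "(\<lambda>m. Determinant.det (mat n n (f m))) \<longlonglongrightarrow> Determinant.det (mat n n g)"
proof -
  have "(\<lambda>m. (\<Sum>p\<in>{p. p permutes {0..<n}}. signof p * (\<Prod>i=0..<n. f m (i, p i))))
        \<longlonglongrightarrow> (\<Sum>p\<in>{p. p permutes {0..<n}}. signof p * (\<Prod>i=0..<n. g (i, p i)))"
  proof (intro tendsto_sum tendsto_mult tendsto_const tendsto_prod)
    fix p i assume p: "p \<in> {p. p permutes {0..<n}}" and i: "i \<in> {0..<n}"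
    have "p i \<in> {0..<n}" using p i by (auto simp: permutes_in_image)
    thus "(\<lambda>m. f m (i, p i)) \<longlonglongrightarrow> g (i, p i)" using i assms by auto
  qed
  moreover have "Determinant.det (mat n n h) = (\<Sum>p\<in>{p. p permutes {0..<n}}. signof p * (\<Prod>i=0..<n. h (i, p i)))" for h :: "nat \<times> nat \<Rightarrow> real"
    unfolding Determinant.det_def
    by (auto intro!: sum.cong prod.cong simp: permutes_in_image)
  ultimately show ?thesis by simp
qed

lemma infsum_support:
  fixes f :: "int \<Rightarrow> 'a::{comm_monoid_add, t2_space}"
  assumes "\<And>t. t < 0 \<or> t > int m \<Longrightarrow> f t = 0"
  shows "(\<Sum>\<^sub>\<infinity>t\<in>UNIV. f t) = (\<Sum>t\<le>m. f (int t))"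
proof -
  have "(\<Sum>\<^sub>\<infinity>t\<in>UNIV. f t) = (\<Sum>\<^sub>\<infinity>t\<in>int ` {..m}. f t)"
  proof (rule infsum_cong_neutral)
    fix x assume x: "x \<in> UNIV - int ` {..m}"
    show "f x = 0"
    proof (rule assms, rule ccontr)
      assume "\<not> (x < 0 \<or> x > int m)"
      hence "x = int (nat x)" "nat x \<in> {..m}" by auto
      hence "x \<in> int ` {..m}" by blast
      with x show False by blast
    qed
  qed auto
  also have "\<dots> = (\<Sum>t\<in>int ` {..m}. f t)" by simp
  also have "\<dots> = (\<Sum>t\<le>m. f (int t))" by (subst sum.reindex) (auto simp: inj_on_def)
  finally show ?thesis .
qed

lemma Cplus_zero: "\<psi> \<in> Cplus m \<Longrightarrow> t < 0 \<or> t > int m \<Longrightarrow> \<psi> t = 0"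
  unfolding Cplus_def by auto

lemma conv_Cplus: assumes C: "\<psi> \<in> Cplus m" shows "conv \<psi> x t = (\<Sum>\<tau>\<le>m. \<psi> (int \<tau>) * x (t - int \<tau>))"
  unfolding conv_def by (rule infsum_support) (simp add: Cplus_zero[OF C])

lemma l2norm_Cplus: "\<psi> \<in> Cplus m \<Longrightarrow> (l2norm \<psi>)^2 = (\<Sum>\<tau>\<le>m. (cmod (\<psi> (int \<tau>)))^2)"
proof -
  assume a: "\<psi> \<in> Cplus m"
  have "(\<Sum>\<^sub>\<infinity>t\<in>UNIV. (cmod (\<psi> t))\<^sup>2) = (\<Sum>\<tau>\<le>m. (cmod (\<psi> (int \<tau>)))^2)"
    by (rule infsum_support) (simp add: Cplus_zero[OF a])
  moreover have "(\<Sum>\<tau>\<le>m. (cmod (\<psi> (int \<tau>)))^2) \<ge> 0" by (intro sum_nonneg) auto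
  ultimately show ?thesis unfolding l2norm_def by simp
qed

lemma moments_poly:
  fixes \<psi> :: "int \<Rightarrow> complex" and p :: "complex poly"
  assumes mom: "\<And>k. k < n \<Longrightarrow> (\<Sum>\<tau>\<le>m. \<psi> (int \<tau>) * of_nat \<tau> ^ k) = (if k = 0 then 1 else 0)"
    and deg: "degree p < n"
  shows "(\<Sum>\<tau>\<le>m. \<psi> (int \<tau>) * poly p (of_nat \<tau>)) = poly p 0"
proof -
  have "(\<Sum>\<tau>\<le>m. \<psi> (int \<tau>) * poly p (of_nat \<tau>)) =
        (\<Sum>\<tau>\<le>m. \<Sum>i\<le>degree p. coeff p i * (\<psi> (int \<tau>) * of_nat \<tau> ^ i))"
    by (simp add: poly_altdef sum_distrib_left mult_ac)
  also have "\<dots> = (\<Sum>i\<le>degree p. coeff p i * (\<Sum>\<tau>\<le>m. \<psi> (int \<tau>) * of_nat \<tau> ^ i))"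
    by (subst sum.swap) (simp add: sum_distrib_left)
  also have "\<dots> = (\<Sum>i\<le>degree p. coeff p i * (if i = 0 then 1 else 0))"
    using deg by (intro sum.cong refl) (simp add: mom)
  also have "\<dots> = (\<Sum>i\<le>degree p. if i = 0 then coeff p i else 0)" by (intro sum.cong) auto
  also have "\<dots> = coeff p 0" by (simp add: sum.delta)
  also have "\<dots> = poly p 0" by (simp add: poly_0_coeff_0)
  finally show ?thesis .
qed

lemma repro_moments:
  fixes \<psi> :: "int \<Rightarrow> complex"
  assumes C: "\<psi> \<in> Cplus m"
    and mom: "\<And>k. k < n \<Longrightarrow> (\<Sum>\<tau>\<le>m. \<psi> (int \<tau>) * of_nat \<tau> ^ k) = (if k = 0 then 1 else 0)"
  shows "reproducing \<psi> (polyseq n)"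
  unfolding reproducing_def
proof
  fix x assume "x \<in> polyseq n"
  then obtain q :: "complex poly" where q: "q = 0 \<or> degree q < n" and x: "\<And>t. x t = poly q (of_int t)"
    unfolding polyseq_def by auto
  show "conv \<psi> x = x"
  proof
    fix t
    define r where "r = q \<circ>\<^sub>p [:of_int t, -1:]"
    have pr: "poly r (of_nat \<tau>) = poly q (of_int (t - int \<tau>))" for \<tau>
      by (simp add: r_def poly_pcompose)
    have "conv \<psi> x t = (\<Sum>\<tau>\<le>m. \<psi> (int \<tau>) * poly r (of_nat \<tau>))"
      unfolding conv_Cplus[OF C] x pr ..
    also have "\<dots> = poly r 0"
    proof (cases "q = 0")
      case True then show ?thesis by (simp add: r_def)
    next
      case False
      hence "degree r < n" using q by (simp add: r_def degree_pcompose)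
      thus ?thesis using moments_poly[where p=r and \<psi>=\<psi> and m=m and n=n] mom by blast
    qed
    also have "\<dots> = x t" by (simp add: r_def poly_pcompose x)
    finally show "conv \<psi> x t = x t" .
  qed
qed

lemma mat_vec_sum:
  assumes A: "A \<in> carrier_mat n n" and i: "i < n"
  shows "(A *\<^sub>v vec n d) $ i = (\<Sum>k<n. A $$ (i,k) * d k)"
  using A i by (auto simp: scalar_prod_def atLeast0LessThan intro!: sum.cong)

lemma cramer0:
  fixes A :: "real mat"
  assumes A: "A \<in> carrier_mat n n" and n: "n > 0"
    and sol: "\<And>i. i < n \<Longrightarrow> (\<Sum>k<n. A $$ (i,k) * d k) = (if i = 0 then 1 else 0)"
  shows "d 0 * Determinant.det A = Determinant.det (replace_col A (unit_vec n 0) 0)"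
proof -
  have "A *\<^sub>v vec n d = unit_vec n 0"
  proof (rule eq_vecI)
    fix i assume "i < dim_vec (unit_vec n 0 :: real vec)"
    hence i: "i < n" by simp
    have "(A *\<^sub>v vec n d) $ i = (\<Sum>k<n. A $$ (i,k) * d k)" by (rule mat_vec_sum[OF A i])
    also have "\<dots> = (if i = 0 then 1 else 0)" by (rule sol[OF i])
    also have "\<dots> = unit_vec n 0 $ i" using i n by simp
    finally show "(A *\<^sub>v vec n d) $ i = unit_vec n 0 $ i" .
  qed (use A in simp)
  hence "Determinant.det (replace_col A (unit_vec n 0) 0) = vec n d $ 0 * Determinant.det A"
    using cramer_lemma_mat[OF A vec_carrier n] by metis
  thus ?thesis using n by simp
qed

lemma solve0:
  fixes A :: "real mat"
  assumes A: "A \<in> carrier_mat n n" and n: "n > 0" and dA: "Determinant.det A \<noteq> 0"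
  shows "\<exists>d. \<forall>i<n. (\<Sum>k<n. A $$ (i,k) * d k) = (if i = 0 then 1 else 0)"
proof -
  define d where "d = (\<lambda>k. adj_mat A $$ (k,0) / Determinant.det A)"
  have adjc: "adj_mat A \<in> carrier_mat n n" using adj_mat(1)[OF A] .
  have "\<forall>i<n. (\<Sum>k<n. A $$ (i,k) * d k) = (if i = 0 then 1 else 0)"
  proof (intro allI impI)
    fix i assume i: "i < n"
    have "(A * adj_mat A) $$ (i,0) = (Determinant.det A \<cdot>\<^sub>m 1\<^sub>m n) $$ (i,0)"
      using adj_mat(2)[OF A] by simp
    moreover have "(A * adj_mat A) $$ (i,0) = (\<Sum>k<n. A $$ (i,k) * adj_mat A $$ (k,0))"
      using A adjc i n by (auto simp: scalar_prod_def atLeast0LessThan intro!: sum.cong)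
    moreover have "(Determinant.det A \<cdot>\<^sub>m 1\<^sub>m n) $$ (i,0) = Determinant.det A * (if i = 0 then 1 else 0)"
      using i n by simp
    ultimately have "(\<Sum>k<n. A $$ (i,k) * adj_mat A $$ (k,0)) = Determinant.det A * (if i = 0 then 1 else 0)"
      by simp
    hence "(\<Sum>k<n. A $$ (i,k) * adj_mat A $$ (k,0)) / Determinant.det A = (if i = 0 then 1 else 0)"
      using dA by simp
    thus "(\<Sum>k<n. A $$ (i,k) * d k) = (if i = 0 then 1 else 0)"
      unfolding d_def by (simp add: sum_divide_distrib)
  qed
  thus ?thesis by blast
qed

definition Hm :: "nat \<Rightarrow> real mat" where
  "Hm n = mat n n (\<lambda>(i,j). 1 / real (i+j+1))"

definition Gm :: "nat \<Rightarrow> nat \<Rightarrow> real mat" where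
  "Gm n m = mat n n (\<lambda>(i,j). Rs m (i+j))"

lemma detH_nonzero:
  assumes n: "n > 0"
  shows "Determinant.det (Hm n) \<noteq> 0"
proof
  assume "Determinant.det (Hm n) = 0"
  then obtain v where v: "v \<in> carrier_vec n" "v \<noteq> 0\<^sub>v n" "Hm n *\<^sub>v v = 0\<^sub>v n"
    using det_0_iff_vec_prod_zero_field[of "Hm n" n] by (auto simp: Hm_def)
  have Hv: "(\<Sum>i<n. v $ i / real (j+i+1)) = 0" if j: "j < n" for j
  proof -
    have "(Hm n *\<^sub>v v) $ j = 0" using v(3) j by simp
    moreover have "(Hm n *\<^sub>v v) $ j = (\<Sum>i<n. v $ i / real (j+i+1))"
      using j v(1) by (auto simp: Hm_def scalar_prod_def atLeast0LessThan intro!: sum.cong)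
    ultimately show ?thesis by simp
  qed
  have "v = 0\<^sub>v n"
  proof (rule eq_vecI)
    fix k assume k: "k < dim_vec (0\<^sub>v n :: real vec)"
    hence k: "k < n" by simp
    obtain c where c: "\<forall>i<n. (\<Sum>j<n. c j / real (i+j+1)) = (if i = k then 1 else 0)"
      using hilbert_solve[OF n, of "\<lambda>i. if i = k then 1 else 0"] by blast
    have "v $ k = (\<Sum>i<n. if i = k then v $ i else 0)"
      using k by (simp add: sum.delta)
    also have "\<dots> = (\<Sum>i<n. (if i = k then 1 else 0) * v $ i)"
      by (intro sum.cong) auto
    also have "\<dots> = (\<Sum>i<n. (\<Sum>j<n. c j / real (i+j+1)) * v $ i)"
      using c by (intro sum.cong) auto
    also have "\<dots> = (\<Sum>i<n. \<Sum>j<n. c j * (v $ i / real (j+i+1)))"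
    proof (intro sum.cong refl)
      fix i
      have "(\<Sum>j<n. c j / real (i+j+1)) * v $ i = (\<Sum>j<n. c j / real (i+j+1) * v $ i)"
        by (rule sum_distrib_right)
      also have "\<dots> = (\<Sum>j<n. c j * (v $ i / real (j+i+1)))"
        by (intro sum.cong refl) (simp add: add.commute)
      finally show "(\<Sum>j<n. c j / real (i+j+1)) * v $ i = (\<Sum>j<n. c j * (v $ i / real (j+i+1)))" .
    qed
    also have "\<dots> = (\<Sum>j<n. \<Sum>i<n. c j * (v $ i / real (j+i+1)))"
      by (rule sum.swap)
    also have "\<dots> = (\<Sum>j<n. c j * (\<Sum>i<n. v $ i / real (j+i+1)))"
      by (simp add: sum_distrib_left)
    also have "\<dots> = 0" using Hv by simp
    finally show "v $ k = 0\<^sub>v n $ k" using k by simp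
  qed (use v in auto)
  with v(2) show False by simp
qed

lemma Q_moment:
  fixes d :: "nat \<Rightarrow> real"
  shows "(\<Sum>\<tau>\<le>m. ((1 / real m) * (\<Sum>j<n. d j * (real \<tau> / real m) ^ j)) * (real \<tau> / real m) ^ k)
       = (\<Sum>j<n. d j * Rs m (k + j))"
proof -
  have "(\<Sum>\<tau>\<le>m. ((1 / real m) * (\<Sum>j<n. d j * (real \<tau> / real m) ^ j)) * (real \<tau> / real m) ^ k)
      = (\<Sum>\<tau>\<le>m. \<Sum>j<n. d j * ((1 / real m) * (real \<tau> / real m) ^ (k + j)))"
    by (intro sum.cong refl) (simp add: sum_distrib_left sum_distrib_right power_add mult_ac)
  also have "\<dots> = (\<Sum>j<n. \<Sum>\<tau>\<le>m. d j * ((1 / real m) * (real \<tau> / real m) ^ (k + j)))"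
    by (rule sum.swap)
  also have "\<dots> = (\<Sum>j<n. d j * Rs m (k + j))"
    by (simp add: Rs_def sum_distrib_left)
  finally show ?thesis .
qed

lemma sol_props:
  fixes d :: "nat \<Rightarrow> real"
  assumes m: "m > 0" and n: "n > 0"
    and sol: "\<And>i. i < n \<Longrightarrow> (\<Sum>k<n. Rs m (i + k) * d k) = (if i = 0 then 1 else 0)"
  defines "Q \<equiv> (\<lambda>\<tau>::nat. (1 / real m) * (\<Sum>j<n. d j * (real \<tau> / real m) ^ j))"
  shows "\<And>k. k < n \<Longrightarrow> (\<Sum>\<tau>\<le>m. Q \<tau> * real \<tau> ^ k) = (if k = 0 then 1 else 0)"
    and "real m * (\<Sum>\<tau>\<le>m. (Q \<tau>)^2) = d 0"
proof -
  have QM: "(\<Sum>\<tau>\<le>m. Q \<tau> * (real \<tau> / real m) ^ k) = (if k = 0 then 1 else 0)" if k: "k < n" for k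
  proof -
    have "(\<Sum>\<tau>\<le>m. Q \<tau> * (real \<tau> / real m) ^ k) = (\<Sum>j<n. d j * Rs m (k + j))"
      unfolding Q_def by (rule Q_moment)
    also have "\<dots> = (\<Sum>j<n. Rs m (k + j) * d j)" by (simp add: mult.commute)
    also have "\<dots> = (if k = 0 then 1 else 0)" by (rule sol[OF k])
    finally show ?thesis .
  qed
  show "(\<Sum>\<tau>\<le>m. Q \<tau> * real \<tau> ^ k) = (if k = 0 then 1 else 0)" if k: "k < n" for k
  proof -
    have "(\<Sum>\<tau>\<le>m. Q \<tau> * real \<tau> ^ k) = real m ^ k * (\<Sum>\<tau>\<le>m. Q \<tau> * (real \<tau> / real m) ^ k)"
      using m by (simp add: sum_distrib_left power_divide)
    also have "\<dots> = real m ^ k * (if k = 0 then 1 else 0)" using QM[OF k] by simp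
    also have "\<dots> = (if k = 0 then 1 else 0)" by simp
    finally show ?thesis .
  qed
  have "real m * (\<Sum>\<tau>\<le>m. (Q \<tau>)^2) = (\<Sum>\<tau>\<le>m. Q \<tau> * (\<Sum>j<n. d j * (real \<tau> / real m) ^ j))"
    using m by (simp add: sum_distrib_left power2_eq_square Q_def)
  also have "\<dots> = (\<Sum>\<tau>\<le>m. \<Sum>j<n. d j * (Q \<tau> * (real \<tau> / real m) ^ j))"
    by (simp add: sum_distrib_left mult_ac)
  also have "\<dots> = (\<Sum>j<n. d j * (\<Sum>\<tau>\<le>m. Q \<tau> * (real \<tau> / real m) ^ j))"
    by (subst sum.swap) (simp add: sum_distrib_left)
  also have "\<dots> = (\<Sum>j<n. d j * (if j = 0 then 1 else 0))"
    by (intro sum.cong refl) (simp add: QM)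
  also have "\<dots> = (\<Sum>j<n. if j = 0 then d j else 0)"
    by (intro sum.cong) auto
  also have "\<dots> = d 0" using n by (simp add: sum.delta)
  finally show "real m * (\<Sum>\<tau>\<le>m. (Q \<tau>)^2) = d 0" .
qed

lemma K_square_sum:
  fixes c :: "nat \<Rightarrow> real"
  shows "(1 / real m) * (\<Sum>\<tau>\<le>m. (\<Sum>j<n. c j * (real \<tau> / real m) ^ j)^2)
       = (\<Sum>i<n. \<Sum>j<n. c i * c j * Rs m (i + j))"
proof -
  have "(1 / real m) * (\<Sum>\<tau>\<le>m. (\<Sum>j<n. c j * (real \<tau> / real m) ^ j)^2)
      = (\<Sum>\<tau>\<le>m. \<Sum>i<n. \<Sum>j<n. c i * c j * ((1 / real m) * (real \<tau> / real m) ^ (i + j)))"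
    by (simp add: power2_eq_square sum_product sum_distrib_left power_add mult_ac)
  also have "\<dots> = (\<Sum>i<n. \<Sum>\<tau>\<le>m. \<Sum>j<n. c i * c j * ((1 / real m) * (real \<tau> / real m) ^ (i + j)))"
    by (rule sum.swap)
  also have "\<dots> = (\<Sum>i<n. \<Sum>j<n. \<Sum>\<tau>\<le>m. c i * c j * ((1 / real m) * (real \<tau> / real m) ^ (i + j)))"
    by (rule sum.cong[OF refl], rule sum.swap)
  also have "\<dots> = (\<Sum>i<n. \<Sum>j<n. c i * c j * Rs m (i + j))"
    by (simp add: Rs_def sum_distrib_left)
  finally show ?thesis .
qed

lemma repl_col0:
  assumes n: "n > 0"
  shows "replace_col (mat n n f) (unit_vec n 0) 0 = mat n n (\<lambda>(i,j). if j = 0 then (if i = 0 then 1 else 0) else f (i,j))"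
  by (rule eq_matI) (use n in \<open>auto simp: replace_col_def\<close>)

lemma upper_seq:
  assumes n: "n > 0"
  shows "\<exists>D. D \<longlonglongrightarrow> (real n)^2 \<and> (\<forall>\<^sub>F m in sequentially. \<exists>\<psi>\<in>Cplus m. reproducing \<psi> (polyseq n) \<and> real m * (l2norm \<psi>)^2 = D m)"
proof -
  define RG where "RG = (\<lambda>m. replace_col (Gm n m) (unit_vec n 0) 0)"
  define RH where "RH = replace_col (Hm n) (unit_vec n 0) 0"
  have detG: "(\<lambda>m. Determinant.det (Gm n m)) \<longlonglongrightarrow> Determinant.det (Hm n)"
    unfolding Gm_def Hm_def
  proof (rule det_mat_tendsto, goal_cases)
    case (1 i j)
    then show ?case using Rs_limit[of "i+j"] by simp
  qed
  have detRG: "(\<lambda>m. Determinant.det (RG m)) \<longlonglongrightarrow> Determinant.det RH"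
    unfolding RG_def RH_def Gm_def Hm_def repl_col0[OF n]
  proof (rule det_mat_tendsto, goal_cases)
    case (1 i j)
    then show ?case using Rs_limit[of "i+j"] by simp
  qed
  have dH: "Determinant.det (Hm n) \<noteq> 0" by (rule detH_nonzero[OF n])
  obtain c where c: "\<forall>i<n. (\<Sum>j<n. c j / real (i+j+1)) = (if i = 0 then 1 else 0)" and c0: "c 0 = (real n)^2"
    using hilbert_e0[OF n] by blast
  have Hc: "c 0 * Determinant.det (Hm n) = Determinant.det RH"
    unfolding RH_def
  proof (rule cramer0)
    show "Hm n \<in> carrier_mat n n" by (simp add: Hm_def)
    fix i assume i: "i < n"
    have "(\<Sum>k<n. Hm n $$ (i,k) * c k) = (\<Sum>k<n. c k / real (i+k+1))"
      using i by (intro sum.cong refl) (simp add: Hm_def)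
    also have "\<dots> = (if i = 0 then 1 else 0)" using c i by blast
    finally show "(\<Sum>k<n. Hm n $$ (i,k) * c k) = (if i = 0 then 1 else 0)" .
  qed (rule n)
  define D where "D = (\<lambda>m. Determinant.det (RG m) / Determinant.det (Gm n m))"
  have "D \<longlonglongrightarrow> Determinant.det RH / Determinant.det (Hm n)"
    unfolding D_def by (rule tendsto_divide[OF detRG detG dH])
  moreover have "Determinant.det RH / Determinant.det (Hm n) = (real n)^2"
    using Hc c0 dH by (simp add: field_simps)
  ultimately have DL: "D \<longlonglongrightarrow> (real n)^2" by simp
  have ev: "\<forall>\<^sub>F m in sequentially. Determinant.det (Gm n m) \<noteq> 0 \<and> m > 0"
    using tendsto_imp_eventually_ne[OF detG dH] eventually_gt_at_top[of 0]
    by eventually_elim auto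
  have "\<forall>\<^sub>F m in sequentially. \<exists>\<psi>\<in>Cplus m. reproducing \<psi> (polyseq n) \<and> real m * (l2norm \<psi>)^2 = D m"
    using ev
  proof eventually_elim
    case (elim m)
    hence dG: "Determinant.det (Gm n m) \<noteq> 0" and m: "m > 0" by auto
    have Gc: "Gm n m \<in> carrier_mat n n" by (simp add: Gm_def)
    obtain d where d: "\<forall>i<n. (\<Sum>k<n. Gm n m $$ (i,k) * d k) = (if i = 0 then 1 else 0)"
      using solve0[OF Gc n dG] by blast
    have sol: "(\<Sum>k<n. Rs m (i + k) * d k) = (if i = 0 then 1 else 0)" if i: "i < n" for i
    proof -
      have "(\<Sum>k<n. Rs m (i + k) * d k) = (\<Sum>k<n. Gm n m $$ (i,k) * d k)"
        using i by (intro sum.cong refl) (simp add: Gm_def)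
      also have "\<dots> = (if i = 0 then 1 else 0)" using d i by blast
      finally show ?thesis .
    qed
    have "d 0 * Determinant.det (Gm n m) = Determinant.det (RG m)"
      unfolding RG_def by (rule cramer0[OF Gc n]) (use d in blast)
    hence d0: "d 0 = D m" unfolding D_def using dG by (simp add: field_simps)
    define Q where "Q = (\<lambda>\<tau>::nat. (1 / real m) * (\<Sum>j<n. d j * (real \<tau> / real m) ^ j))"
    have SP1: "(\<Sum>\<tau>\<le>m. Q \<tau> * real \<tau> ^ k) = (if k = 0 then 1 else 0)" if k: "k < n" for k
      using sol_props(1)[OF m n sol] k unfolding Q_def by blast
    have SP2: "real m * (\<Sum>\<tau>\<le>m. (Q \<tau>)^2) = d 0"
      using sol_props(2)[OF m n sol] unfolding Q_def by blast
    define \<psi> where "\<psi> = (\<lambda>t::int. if 0 \<le> t \<and> t \<le> int m then complex_of_real (Q (nat t)) else 0)"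
    have C: "\<psi> \<in> Cplus m" by (auto simp: Cplus_def \<psi>_def)
    have \<psi>i: "\<psi> (int \<tau>) = complex_of_real (Q \<tau>)" if "\<tau> \<le> m" for \<tau>
      using that by (simp add: \<psi>_def)
    have mom: "(\<Sum>\<tau>\<le>m. \<psi> (int \<tau>) * of_nat \<tau> ^ k) = (if k = 0 then 1 else 0)" if k: "k < n" for k
    proof -
      have "(\<Sum>\<tau>\<le>m. \<psi> (int \<tau>) * of_nat \<tau> ^ k) = complex_of_real (\<Sum>\<tau>\<le>m. Q \<tau> * real \<tau> ^ k)"
        by (simp add: \<psi>i)
      also have "\<dots> = (if k = 0 then 1 else 0)" using SP1[OF k] by simp
      finally show ?thesis .
    qed
    have R: "reproducing \<psi> (polyseq n)" by (rule repro_moments[OF C mom])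
    have "(l2norm \<psi>)^2 = (\<Sum>\<tau>\<le>m. (cmod (\<psi> (int \<tau>)))^2)" by (rule l2norm_Cplus[OF C])
    also have "\<dots> = (\<Sum>\<tau>\<le>m. (Q \<tau>)^2)" by (intro sum.cong refl) (simp add: \<psi>i)
    finally have "real m * (l2norm \<psi>)^2 = D m" using SP2 d0 by simp
    with C R show ?case by blast
  qed
  with DL show ?thesis by blast
qed

lemma lower_bound:
  fixes c :: "nat \<Rightarrow> real" and \<phi> :: "int \<Rightarrow> complex"
  assumes n: "n > 0" and m: "m > 0" and C: "\<phi> \<in> Cplus m" and R: "reproducing \<phi> (polyseq n)"
    and c0: "c 0 = (real n)^2"
  shows "((real n)^2)^2 \<le> (l2norm \<phi>)^2 * (\<Sum>\<tau>\<le>m. (\<Sum>j<n. c j * (real \<tau> / real m) ^ j)^2)"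
proof -
  define K where "K = (\<lambda>\<tau>::nat. \<Sum>j<n. c j * (real \<tau> / real m) ^ j)"
  define q :: "complex poly" where "q = (\<Sum>j<n. Polynomial.monom (complex_of_real (c j * (-1 / real m) ^ j)) j)"
  have degq: "degree q < n"
  proof -
    have "degree q \<le> n - 1"
      unfolding q_def by (rule degree_sum_le) (auto intro: order.trans[OF degree_monom_le])
    thus ?thesis using n by linarith
  qed
  have pq: "poly q z = (\<Sum>j<n. complex_of_real (c j * (-1 / real m) ^ j) * z ^ j)" for z
    by (simp add: q_def poly_sum poly_monom)
  define x where "x = (\<lambda>t::int. poly q (of_int t))"
  have xin: "x \<in> polyseq n" unfolding polyseq_def x_def using degq by blast
  have "conv \<phi> x 0 = x 0" using R xin unfolding reproducing_def by metis
  moreover have "conv \<phi> x 0 = (\<Sum>\<tau>\<le>m. \<phi> (int \<tau>) * complex_of_real (K \<tau>))"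
  proof -
    have "conv \<phi> x 0 = (\<Sum>\<tau>\<le>m. \<phi> (int \<tau>) * x (0 - int \<tau>))" by (rule conv_Cplus[OF C])
    also have "\<dots> = (\<Sum>\<tau>\<le>m. \<phi> (int \<tau>) * complex_of_real (K \<tau>))"
    proof (intro sum.cong refl arg_cong2[where f="(*)"])
      fix \<tau> :: nat
      have "x (0 - int \<tau>) = (\<Sum>j<n. complex_of_real (c j * (-1 / real m) ^ j) * (- of_nat \<tau>) ^ j)"
        by (simp add: x_def pq)
      also have "\<dots> = (\<Sum>j<n. complex_of_real (c j * (real \<tau> / real m) ^ j))"
      proof (intro sum.cong refl)
        fix j
        have "(-1 / real m) ^ j * (- real \<tau>) ^ j = (real \<tau> / real m) ^ j"
          by (simp add: power_mult_distrib[symmetric])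
        hence "complex_of_real ((-1 / real m) ^ j * (- real \<tau>) ^ j) = complex_of_real ((real \<tau> / real m) ^ j)"
          by simp
        thus "complex_of_real (c j * (-1 / real m) ^ j) * (- of_nat \<tau>) ^ j = complex_of_real (c j * (real \<tau> / real m) ^ j)"
          by (simp add: mult.assoc)
      qed
      also have "\<dots> = complex_of_real (K \<tau>)" by (simp add: K_def)
      finally show "x (0 - int \<tau>) = complex_of_real (K \<tau>)" .
    qed
    finally show ?thesis .
  qed
  moreover have "x 0 = complex_of_real ((real n)^2)"
  proof -
    have "x 0 = (\<Sum>j<n. if j = 0 then complex_of_real (c j) else 0)"
      unfolding x_def pq by (intro sum.cong refl) auto
    also have "\<dots> = complex_of_real (c 0)" using n by (simp add: sum.delta)
    finally show ?thesis using c0 by simp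
  qed
  ultimately have eq: "(\<Sum>\<tau>\<le>m. \<phi> (int \<tau>) * complex_of_real (K \<tau>)) = complex_of_real ((real n)^2)" by simp
  have "(real n)^2 = cmod (\<Sum>\<tau>\<le>m. \<phi> (int \<tau>) * complex_of_real (K \<tau>))"
    unfolding eq norm_of_real by simp
  also have "\<dots> \<le> (\<Sum>\<tau>\<le>m. cmod (\<phi> (int \<tau>)) * \<bar>K \<tau>\<bar>)"
    by (rule order.trans[OF norm_sum]) (simp add: norm_mult)
  finally have le1: "(real n)^2 \<le> (\<Sum>\<tau>\<le>m. cmod (\<phi> (int \<tau>)) * \<bar>K \<tau>\<bar>)" .
  have "((real n)^2)^2 \<le> (\<Sum>\<tau>\<le>m. cmod (\<phi> (int \<tau>)) * \<bar>K \<tau>\<bar>)^2"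
    by (rule power_mono[OF le1]) simp
  also have "\<dots> \<le> (\<Sum>\<tau>\<le>m. (cmod (\<phi> (int \<tau>)))^2) * (\<Sum>\<tau>\<le>m. \<bar>K \<tau>\<bar>^2)"
    by (rule Cauchy_Schwarz_ineq_sum)
  also have "\<dots> = (l2norm \<phi>)^2 * (\<Sum>\<tau>\<le>m. (K \<tau>)^2)"
    by (simp add: l2norm_Cplus[OF C])
  finally show ?thesis unfolding K_def .
qed

lemma l2norm_nonneg: "l2norm x \<ge> 0"
  unfolding l2norm_def by (intro real_sqrt_ge_zero infsum_nonneg) auto

lemma zero_reproducing0: "reproducing (\<lambda>_. 0) (polyseq 0)"
  unfolding reproducing_def
proof
  fix x assume "x \<in> polyseq 0"
  then obtain q :: "complex poly" where "q = 0" "\<And>t. x t = poly q (of_int t)"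
    unfolding polyseq_def by auto
  hence x0: "x = (\<lambda>_. 0)" by auto
  show "conv (\<lambda>_. 0) x = x" unfolding x0 conv_def by auto
qed

lemma l2norm_zero: "l2norm (\<lambda>_. 0) = 0"
  unfolding l2norm_def by simp

theorem proposition13:
  fixes s :: nat and \<phi> :: "nat \<Rightarrow> int \<Rightarrow> complex"
  assumes "\<And>m. (\<exists>\<psi>\<in>Cplus m. reproducing \<psi> (polyseq s)) \<Longrightarrow>
             \<phi> m \<in> Cplus m \<and> reproducing (\<phi> m) (polyseq s) \<and>
             (\<forall>\<psi>\<in>Cplus m. reproducing \<psi> (polyseq s) \<longrightarrow> l2norm (\<phi> m) \<le> l2norm \<psi>)"
  shows "(\<lambda>m. real m * (l2norm (\<phi> m))\<^sup>2) \<longlonglongrightarrow> (real s)\<^sup>2"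
proof (cases "s = 0")
  case True
  have "l2norm (\<phi> m) = 0" for m
  proof -
    have z: "(\<lambda>_. 0) \<in> Cplus m" by (simp add: Cplus_def)
    have rz: "reproducing (\<lambda>_. 0) (polyseq s)" using zero_reproducing0 True by simp
    have "l2norm (\<phi> m) \<le> l2norm (\<lambda>_. 0)" using assms[of m] z rz by blast
    thus ?thesis using l2norm_nonneg[of "\<phi> m"] l2norm_zero by simp
  qed
  thus ?thesis using True by simp
next
  case False
  hence n: "s > 0" by simp
  obtain c where c: "\<forall>i<s. (\<Sum>j<s. c j / real (i+j+1)) = (if i = 0 then 1 else 0)" and c0: "c 0 = (real s)^2"
    using hilbert_e0[OF n] by blast
  obtain D where DL: "D \<longlonglongrightarrow> (real s)^2"
    and Dev: "\<forall>\<^sub>F m in sequentially. \<exists>\<psi>\<in>Cplus m. reproducing \<psi> (polyseq s) \<and> real m * (l2norm \<psi>)^2 = D m"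
    using upper_seq[OF n] by blast
  define S where "S = (\<lambda>m. (\<Sum>\<tau>\<le>m. (\<Sum>j<s. c j * (real \<tau> / real m) ^ j)^2))"
  define A where "A = (\<lambda>m. (1 / real m) * S m)"
  have A_eq: "A m = (\<Sum>i<s. \<Sum>j<s. c i * c j * Rs m (i + j))" for m
    unfolding A_def S_def by (rule K_square_sum)
  have "(\<lambda>m. \<Sum>i<s. \<Sum>j<s. c i * c j * Rs m (i + j)) \<longlonglongrightarrow> (\<Sum>i<s. \<Sum>j<s. c i * c j * (1 / real (Suc (i + j))))"
    by (intro tendsto_sum tendsto_mult tendsto_const Rs_limit)
  moreover have "(\<Sum>i<s. \<Sum>j<s. c i * c j * (1 / real (Suc (i + j)))) = (real s)^2"
  proof -
    have "(\<Sum>i<s. \<Sum>j<s. c i * c j * (1 / real (Suc (i + j)))) = (\<Sum>i<s. c i * (\<Sum>j<s. c j / real (i+j+1)))"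
      by (simp add: sum_distrib_left mult.assoc)
    also have "\<dots> = (\<Sum>i<s. if i = 0 then c i else 0)"
      using c by (intro sum.cong refl) auto
    also have "\<dots> = c 0" using n by (simp add: sum.delta)
    finally show ?thesis using c0 by simp
  qed
  ultimately have AL: "A \<longlonglongrightarrow> (real s)^2" unfolding A_eq[abs_def] by simp
  have LL: "(\<lambda>m. ((real s)^2)^2 / A m) \<longlonglongrightarrow> ((real s)^2)^2 / (real s)^2"
    by (rule tendsto_divide[OF tendsto_const AL]) (use n in simp)
  have LL': "((real s)^2)^2 / (real s)^2 = (real s)^2" using n by (simp add: power2_eq_square)
  have Apos: "\<forall>\<^sub>F m in sequentially. A m > 0"
    using order_tendstoD(1)[OF AL, of 0] n by simp
  have main: "\<forall>\<^sub>F m in sequentially. ((real s)^2)^2 / A m \<le> real m * (l2norm (\<phi> m))\<^sup>2 \<and> real m * (l2norm (\<phi> m))\<^sup>2 \<le> D m"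
    using Dev Apos eventually_gt_at_top[of 0]
  proof eventually_elim
    case (elim m)
    then obtain \<psi> where \<psi>: "\<psi> \<in> Cplus m" "reproducing \<psi> (polyseq s)" "real m * (l2norm \<psi>)^2 = D m" by blast
    have Am: "A m > 0" and m: "m > 0" using elim by auto
    have P: "\<phi> m \<in> Cplus m" "reproducing (\<phi> m) (polyseq s)" "l2norm (\<phi> m) \<le> l2norm \<psi>"
      using assms[of m] \<psi> by blast+
    have "(l2norm (\<phi> m))^2 \<le> (l2norm \<psi>)^2"
      by (rule power_mono[OF P(3) l2norm_nonneg])
    hence "real m * (l2norm (\<phi> m))\<^sup>2 \<le> real m * (l2norm \<psi>)\<^sup>2" by (rule mult_left_mono) simp
    hence up: "real m * (l2norm (\<phi> m))\<^sup>2 \<le> D m" using \<psi>(3) by simp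
    have "((real s)^2)^2 \<le> (l2norm (\<phi> m))^2 * S m"
      unfolding S_def by (rule lower_bound[where c=c, OF n m P(1) P(2) c0])
    also have "S m = real m * A m" using m by (simp add: A_def)
    finally have "((real s)^2)^2 \<le> (real m * (l2norm (\<phi> m))^2) * A m" by (simp add: mult_ac)
    hence low: "((real s)^2)^2 / A m \<le> real m * (l2norm (\<phi> m))\<^sup>2"
      using Am by (simp add: pos_divide_le_eq)
    show ?case using up low by blast
  qed
  show ?thesis
  proof (rule tendsto_sandwich[OF _ _ LL[unfolded LL'] DL])
    show "\<forall>\<^sub>F m in sequentially. ((real s)^2)^2 / A m \<le> real m * (l2norm (\<phi> m))\<^sup>2"
      using main by (rule eventually_mono) blast
    show "\<forall>\<^sub>F m in sequentially. real m * (l2norm (\<phi> m))\<^sup>2 \<le> D m"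
      using main by (rule eventually_mono) blast
  qed
qed

end
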